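(* Let $G=G_1\times G_2$ be a product of commutative groups, $V_1\subset G_1$, $V_2\subset G_2$ finite sets, $U=V_1\times V_2$, and $1<p<\infty$. Then $\beta_p(U)=\beta_p(V_1)\beta_p(V_2)$, where $\beta_p(U)$ is computed in $G$ and $\beta_p(V_i)$ in $G_i$.
   Context: For a finite set $U$ in a commutative group $K$ and $1<p<\infty$, $\beta_p(U)=\inf_{A,B}\frac{|A+B+U|}{|A|^{1/p}|B|^{1-1/p}}$, the infimum over all nonempty finite $A,B\subset K$. *)

theory Defs
  imports Complex_Main "HOL-Library.Product_Plus"
begin

definition sumset :: "'a::ab_group_add set \<Rightarrow> 'a set \<Rightarrow> 'a set" where
  "sumset A B = {a + b | a b. a \<in> A \<and> b \<in> B}"

definition beta :: "real \<Rightarrow> 'a::ab_group_add set \<Rightarrow> real" where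
  "beta p U = Inf {real (card (sumset (sumset A B) U)) /
                    (real (card A) powr (1 / p) * real (card B) powr (1 - 1 / p)) | A B.
                   finite A \<and> A \<noteq> {} \<and> finite B \<and> B \<noteq> {}}"

end

theory Submission
  imports Defs "HOL-Analysis.Convex"
begin


lemma young0: fixes a b t :: real
  assumes "0<t" "t<1" "a\<ge>0" "b\<ge>0"
  shows "a powr t * b powr (1-t) \<le> t*a + (1-t)*b"
proof (cases "a=0 \<or> b=0")
  case True then show ?thesis using assms by auto
next
  case False then show ?thesis using Youngs_inequality_0[of t "1-t" a b] assms by auto
qed

lemma superadd: fixes t x1 x2 y1 y2 :: real
  assumes "0<t" "t<1" "x1\<ge>0" "x2\<ge>0" "y1\<ge>0" "y2\<ge>0"
  shows "x1 powr t * y1 powr (1-t) + x2 powr t * y2 powr (1-t) \<le> (x1+x2) powr t * (y1+y2) powr (1-t)"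
proof (cases "x1+x2 = 0 \<or> y1+y2=0")
  case True
  then have "(x1 = 0 \<and> x2 = 0) \<or> (y1 = 0 \<and> y2 = 0)" using assms by auto
  then show ?thesis using assms by auto
next
  case False
  define X where "X = x1+x2"
  define Y where "Y = y1+y2"
  have XY: "X>0" "Y>0" using False assms X_def Y_def by auto
  have key: "x powr t * y powr (1-t) \<le> X powr t * Y powr (1-t) * (t*(x/X) + (1-t)*(y/Y))"
    if "x\<ge>0" "y\<ge>0" for x y
  proof -
    have "x powr t * y powr (1-t) = X powr t * Y powr (1-t) * ((x/X) powr t * (y/Y) powr (1-t))"
      using XY that by (simp add: powr_divide)
    also have "\<dots> \<le> X powr t * Y powr (1-t) * (t*(x/X) + (1-t)*(y/Y))"
      apply (rule mult_left_mono)
      using young0[of t "x/X" "y/Y"] assms XY that by auto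
    finally show ?thesis .
  qed
  have "x1 powr t * y1 powr (1-t) + x2 powr t * y2 powr (1-t) \<le>
     X powr t * Y powr (1-t) * (t*(x1/X) + (1-t)*(y1/Y)) + X powr t * Y powr (1-t) * (t*(x2/X) + (1-t)*(y2/Y))"
    using key[of x1 y1] key[of x2 y2] assms by linarith
  also have "\<dots> = X powr t * Y powr (1-t) * (t*((x1+x2)/X) + (1-t)*((y1+y2)/Y))"
    by (simp add: algebra_simps add_divide_distrib)
  also have "\<dots> = X powr t * Y powr (1-t)" using XY X_def Y_def by simp
  finally show ?thesis using X_def Y_def by simp
qed


lemma beta_set_bdd: "bdd_below {real (card (sumset (sumset A B) U)) /
                    (real (card A) powr (1 / p) * real (card B) powr (1 - 1 / p)) | A B.
                   finite A \<and> A \<noteq> {} \<and> finite B \<and> B \<noteq> {}}"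
  by (rule bdd_belowI[of _ 0]) auto

lemma beta_le:
  assumes "finite A" "A \<noteq> {}" "finite B" "B \<noteq> {}"
  shows "beta p U \<le> real (card (sumset (sumset A B) U)) /
                    (real (card A) powr (1 / p) * real (card B) powr (1 - 1 / p))"
  unfolding beta_def by (rule cInf_lower[OF _ beta_set_bdd]) (use assms in blast)

lemma beta_ge:
  fixes U :: "'a::ab_group_add set"
  assumes "\<And>A B. finite A \<Longrightarrow> A \<noteq> {} \<Longrightarrow> finite B \<Longrightarrow> B \<noteq> {} \<Longrightarrow>
     c \<le> real (card (sumset (sumset A B) U)) /
                    (real (card A) powr (1 / p) * real (card B) powr (1 - 1 / p))"
  shows "c \<le> beta p U"
  unfolding beta_def
proof (rule cInf_greatest)
  show "{real (card (sumset (sumset A B) U)) /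
                    (real (card A) powr (1 / p) * real (card B) powr (1 - 1 / p)) | A B.
                   finite A \<and> A \<noteq> {} \<and> finite B \<and> B \<noteq> {}} \<noteq> {}"
  proof -
    have "finite {0::'a}" "{0::'a} \<noteq> {}" by auto
    then show ?thesis by blast
  qed
qed (use assms in blast)

lemma beta_nonneg: "0 \<le> beta p (U::'a::ab_group_add set)"
  by (rule beta_ge) auto

lemma beta_card:
  assumes "finite A" "A \<noteq> {}" "finite B" "B \<noteq> {}"
  shows "beta p U * (real (card A) powr (1 / p) * real (card B) powr (1 - 1 / p))
     \<le> real (card (sumset (sumset A B) U))"
proof -
  have "real (card A) > 0" "real (card B) > 0" using assms by (auto simp: card_gt_0_iff)
  then have "real (card A) powr (1 / p) * real (card B) powr (1 - 1 / p) > 0" by simp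
  then show ?thesis using beta_le[OF assms, of p U] by (simp add: pos_le_divide_eq)
qed

lemma scale_gm: fixes k x y t :: real
  assumes "k\<ge>0" "x\<ge>0" "y\<ge>0"
  shows "(k*x) powr t * (k*y) powr (1-t) = k * (x powr t * y powr (1-t))"
proof (cases "k=0")
  case True then show ?thesis by simp
next
  case False
  then have "k powr t * k powr (1-t) = k" using assms by (simp flip: powr_add)
  then show ?thesis using assms by (simp add: powr_mult algebra_simps)
qed



lemma func_ineq:
  fixes V Y :: "'b::ab_group_add set" and p :: real
  assumes p: "1 < p" and fY: "finite Y"
  shows "finite S \<Longrightarrow> finite T \<Longrightarrow> sumset (sumset S T) V \<subseteq> Y \<Longrightarrow>
    (\<forall>y\<in>Y. 0 \<le> h y) \<Longrightarrow> (\<forall>s\<in>S. 0 < a s) \<Longrightarrow> (\<forall>t\<in>T. 0 < b t) \<Longrightarrow>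
    (\<forall>s\<in>S. \<forall>t\<in>T. \<forall>v\<in>V. a s powr (1/p) * b t powr (1-1/p) \<le> h (s+t+v)) \<Longrightarrow>
    beta p V * ((sum a S) powr (1/p) * (sum b T) powr (1-1/p)) \<le> sum h Y"
proof (induction "card S + card T" arbitrary: S T a b h rule: less_induct)
  case less
  define th where "th = 1/p"
  have th: "0 < th" "th < 1" "1 - 1/p = 1 - th" using p by (auto simp: th_def)
  note fS = less.prems(1) and fT = less.prems(2) and ZY = less.prems(3) and hnn = less.prems(4)
    and apos = less.prems(5) and bpos = less.prems(6) and hyp = less.prems(7)
  show ?case
  proof (cases "S = {} \<or> T = {}")
    case True
    have "0 \<le> sum h Y" using hnn by (simp add: sum_nonneg)
    then show ?thesis using True by auto
  next
    case False
    then have Sne: "S \<noteq> {}" and Tne: "T \<noteq> {}" by auto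
    define A where "A = sum a S"
    define B where "B = sum b T"
    have A0: "A > 0" using Sne fS apos unfolding A_def by (simp add: sum_pos)
    have B0: "B > 0" using Tne fT bpos unfolding B_def by (simp add: sum_pos)
    define ma where "ma = Min (a ` S)"
    define mb where "mb = Min (b ` T)"
    have ma_le: "s \<in> S \<Longrightarrow> ma \<le> a s" for s unfolding ma_def using fS by simp
    have mb_le: "t \<in> T \<Longrightarrow> mb \<le> b t" for t unfolding mb_def using fT by simp
    obtain s0 where s0: "s0 \<in> S" "a s0 = ma" unfolding ma_def using fS Sne
      by (metis (no_types, lifting) Min_in finite_imageI image_iff image_is_empty)
    obtain t0 where t0: "t0 \<in> T" "b t0 = mb" unfolding mb_def using fT Tne
      by (metis (no_types, lifting) Min_in finite_imageI image_iff image_is_empty)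
    have ma0: "ma > 0" using s0 apos by auto
    have mb0: "mb > 0" using t0 bpos by auto
    have cS: "real (card S) > 0" using fS Sne by (simp add: card_gt_0_iff)
    have cT: "real (card T) > 0" using fT Tne by (simp add: card_gt_0_iff)
    have maA: "real (card S) * ma \<le> A" unfolding A_def
      using sum_mono[of S "\<lambda>_. ma" a] ma_le by auto
    have mbB: "real (card T) * mb \<le> B" unfolding B_def
      using sum_mono[of T "\<lambda>_. mb" b] mb_le by auto
    define c where "c = min (ma * card S / A) (mb * card T / B)"
    have c0: "c > 0" unfolding c_def using ma0 mb0 cS cT A0 B0 by auto
    have c1: "c \<le> 1" unfolding c_def using maA A0 by (auto simp: min_le_iff_disj mult.commute)
    define dl where "dl = c * A / card S"
    define dm where "dm = c * B / card T"
    have dl0: "dl > 0" "dm > 0" unfolding dl_def dm_def using c0 A0 B0 cS cT by auto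
    have dlma: "dl \<le> ma"
    proof -
      have "c \<le> ma * card S / A" unfolding c_def by simp
      then have "c * A \<le> ma * card S / A * A" using A0 by (intro mult_right_mono) auto
      then have "c * A \<le> ma * card S" using A0 by simp
      then show ?thesis unfolding dl_def using cS by (simp add: pos_divide_le_eq)
    qed
    have dmmb: "dm \<le> mb"
    proof -
      have "c \<le> mb * card T / B" unfolding c_def by simp
      then have "c * B \<le> mb * card T / B * B" using B0 by (intro mult_right_mono) auto
      then have "c * B \<le> mb * card T" using B0 by simp
      then show ?thesis unfolding dm_def using cT by (simp add: pos_divide_le_eq)
    qed
    have dl_or: "dl = ma \<or> dm = mb"
    proof (cases "ma * card S / A \<le> mb * card T / B")
      case True
      then have "c = ma * card S / A" unfolding c_def by simp
      then have "dl = ma" unfolding dl_def using A0 cS by simp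
      then show ?thesis by simp
    next
      case False
      then have "c = mb * card T / B" unfolding c_def by simp
      then have "dm = mb" unfolding dm_def using B0 cT by simp
      then show ?thesis by simp
    qed
    define S' where "S' = {s\<in>S. dl < a s}"
    define T' where "T' = {t\<in>T. dm < b t}"
    define a' where "a' = (\<lambda>s. a s - dl)"
    define b' where "b' = (\<lambda>t. b t - dm)"
    have S'S: "S' \<subseteq> S" and T'T: "T' \<subseteq> T" unfolding S'_def T'_def by auto
    have fS': "finite S'" "finite T'" using fS fT S'S T'T finite_subset by auto
    have card_lt: "card S' + card T' < card S + card T"
    proof -
      have "card S' \<le> card S" "card T' \<le> card T" using S'S T'T fS fT card_mono by auto
      moreover have "card S' < card S \<or> card T' < card T"
      proof (cases "dl = ma")
        case True
        then have "s0 \<notin> S'" unfolding S'_def using s0 by auto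
        then have "S' \<subset> S" using S'S s0 by auto
        then show ?thesis using fS psubset_card_mono by blast
      next
        case False
        then have "dm = mb" using dl_or by simp
        then have "t0 \<notin> T'" unfolding T'_def using t0 by auto
        then have "T' \<subset> T" using T'T t0 by auto
        then show ?thesis using fT psubset_card_mono by blast
      qed
      ultimately show ?thesis by linarith
    qed
    have sumA': "sum a' S' = (1 - c) * A"
    proof -
      have "sum a' S' = sum a' S"
        apply (rule sum.mono_neutral_left[OF fS S'S])
        using ma_le dlma unfolding S'_def a'_def by force
      also have "\<dots> = A - card S * dl" unfolding a'_def A_def by (simp add: sum_subtractf)
      also have "\<dots> = (1 - c) * A" unfolding dl_def using cS by (simp add: algebra_simps)
      finally show ?thesis .
    qed
    have sumB': "sum b' T' = (1 - c) * B"
    proof -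
      have "sum b' T' = sum b' T"
        apply (rule sum.mono_neutral_left[OF fT T'T])
        using mb_le dmmb unfolding T'_def b'_def by force
      also have "\<dots> = B - card T * dm" unfolding b'_def B_def by (simp add: sum_subtractf)
      also have "\<dots> = (1 - c) * B" unfolding dm_def using cT by (simp add: algebra_simps)
      finally show ?thesis .
    qed
    define Z where "Z = sumset (sumset S T) V"
    define r where "r = dl powr th * dm powr (1 - th)"
    define h' where "h' = (\<lambda>y. h y - (if y \<in> Z then r else 0))"
    have Zmem: "y \<in> Z \<Longrightarrow> \<exists>s\<in>S. \<exists>t\<in>T. \<exists>v\<in>V. y = s + t + v" for y
      unfolding Z_def sumset_def by blast
    have hr: "r \<le> h y" if yZ: "y \<in> Z" for y
    proof -
      obtain s t v where stv: "s\<in>S" "t\<in>T" "v\<in>V" "y = s+t+v" using Zmem[OF yZ] by blast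
      have m1: "dl powr th \<le> a s powr th"
        by (rule powr_mono2) (use th dl0 dlma ma_le[OF stv(1)] in auto)
      have m2: "dm powr (1-th) \<le> b t powr (1-th)"
        by (rule powr_mono2) (use th dl0 dmmb mb_le[OF stv(2)] in auto)
      have "r \<le> a s powr th * b t powr (1 - th)" unfolding r_def
        by (rule mult_mono[OF m1 m2]) auto
      also have "\<dots> \<le> h y" using hyp stv(1-3) unfolding th_def stv(4) by blast
      finally show ?thesis .
    qed
    have ZY': "sumset (sumset S' T') V \<subseteq> Y" using ZY S'S T'T unfolding sumset_def by blast
    have hnn': "\<forall>y\<in>Y. 0 \<le> h' y" unfolding h'_def using hnn hr by auto
    have apos': "\<forall>s\<in>S'. 0 < a' s" unfolding S'_def a'_def by auto
    have bpos': "\<forall>t\<in>T'. 0 < b' t" unfolding T'_def b'_def by auto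
    have hyp': "\<forall>s\<in>S'. \<forall>t\<in>T'. \<forall>v\<in>V. a' s powr (1/p) * b' t powr (1-1/p) \<le> h' (s+t+v)"
    proof (intro ballI)
      fix s t v assume st: "s \<in> S'" "t \<in> T'" "v \<in> V"
      have inZ: "s + t + v \<in> Z" unfolding Z_def sumset_def using st S'S T'T by blast
      have "a' s powr th * b' t powr (1-th) + r \<le> (a' s + dl) powr th * (b' t + dm) powr (1 - th)"
        unfolding r_def apply (rule superadd)
        using th st dl0 unfolding S'_def T'_def a'_def b'_def by auto
      also have "\<dots> = a s powr th * b t powr (1-th)" unfolding a'_def b'_def by simp
      also have "\<dots> \<le> h (s+t+v)"
      proof -
        have "s \<in> S" "t \<in> T" using st S'S T'T by auto
        then show ?thesis using hyp st(3) unfolding th_def by blast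
      qed
      finally have X: "a' s powr th * b' t powr (1-th) + r \<le> h (s+t+v)" .
      show "a' s powr (1/p) * b' t powr (1-1/p) \<le> h' (s+t+v)"
        using X inZ unfolding h'_def th_def by simp
    qed
    have IH: "beta p V * ((sum a' S') powr (1/p) * (sum b' T') powr (1-1/p)) \<le> sum h' Y"
      using less.hyps[OF card_lt fS' ZY' hnn' apos' bpos' hyp'] .
    have fZ: "finite Z" using ZY fY finite_subset unfolding Z_def by blast
    have sumh: "sum h Y = sum h' Y + r * card Z"
    proof -
      have "sum (\<lambda>y. if y \<in> Z then r else 0) Y = r * card Z"
        using ZY fY unfolding Z_def by (simp add: sum.If_cases Int_absorb1)
      then show ?thesis unfolding h'_def by (simp add: sum_subtractf)
    qed
    define M where "M = A powr th * B powr (1 - th)"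
    have e1: "(sum a' S') powr (1/p) * (sum b' T') powr (1-1/p) = (1 - c) * M"
      unfolding sumA' sumB' M_def using scale_gm[of "1-c" A B th] c1 A0 B0 th by simp
    have e2: "r * (real (card S) powr th * real (card T) powr (1 - th)) = c * M"
    proof -
      have "r * (real (card S) powr th * real (card T) powr (1 - th))
         = (dl * card S) powr th * (dm * card T) powr (1 - th)"
        unfolding r_def using dl0 by (simp add: powr_mult algebra_simps)
      also have "\<dots> = (c * A) powr th * (c * B) powr (1 - th)"
        unfolding dl_def dm_def using cS cT by simp
      also have "\<dots> = c * M" unfolding M_def using scale_gm[of c A B th] c0 A0 B0 by simp
      finally show ?thesis .
    qed
    have bc: "beta p V * (real (card S) powr th * real (card T) powr (1 - th)) \<le> real (card Z)"
      unfolding Z_def th_def by (rule beta_card[OF fS Sne fT Tne])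
    have rnn: "0 \<le> r" unfolding r_def by simp
    have "beta p V * (c * M) = r * (beta p V * (real (card S) powr th * real (card T) powr (1 - th)))"
      by (metis e2 mult.left_commute)
    also have "\<dots> \<le> r * card Z" by (rule mult_left_mono[OF bc rnn])
    finally have "beta p V * (c * M) \<le> r * card Z" .
    moreover have "beta p V * ((1 - c) * M) \<le> sum h' Y" using IH e1 by simp
    moreover have "beta p V * M = beta p V * (c * M) + beta p V * ((1 - c) * M)"
      by (simp add: algebra_simps)
    ultimately have "beta p V * M \<le> sum h Y" using sumh by linarith
    then show ?thesis unfolding M_def A_def B_def th_def .
  qed
qed



lemma sumset_iff: "z \<in> sumset A B \<longleftrightarrow> (\<exists>a\<in>A. \<exists>b\<in>B. z = a + b)"
  unfolding sumset_def by blast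

lemma sumsetE: assumes "z \<in> sumset A B" obtains a b where "a \<in> A" "b \<in> B" "z = a + b"
  using assms unfolding sumset_def by blast

lemma sumsetI: "a \<in> A \<Longrightarrow> b \<in> B \<Longrightarrow> a + b \<in> sumset A B"
  unfolding sumset_def by blast

lemma sumset_prod:
  fixes A1 B1 V1 :: "'a::ab_group_add set" and A2 B2 V2 :: "'b::ab_group_add set"
  shows "sumset (sumset (A1 \<times> A2) (B1 \<times> B2)) (V1 \<times> V2) =
    sumset (sumset A1 B1) V1 \<times> sumset (sumset A2 B2) V2"
proof (rule set_eqI)
  fix z :: "'a \<times> 'b"
  obtain z1 z2 where z: "z = (z1, z2)" by (cases z)
  show "z \<in> sumset (sumset (A1 \<times> A2) (B1 \<times> B2)) (V1 \<times> V2) \<longleftrightarrow>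
    z \<in> sumset (sumset A1 B1) V1 \<times> sumset (sumset A2 B2) V2"
  proof
    assume "z \<in> sumset (sumset (A1 \<times> A2) (B1 \<times> B2)) (V1 \<times> V2)"
    then obtain w v where wv: "w \<in> sumset (A1 \<times> A2) (B1 \<times> B2)" "v \<in> V1 \<times> V2" "z = w + v"
      by (rule sumsetE)
    from wv(1) obtain a b where ab: "a \<in> A1 \<times> A2" "b \<in> B1 \<times> B2" "w = a + b"
      by (rule sumsetE)
    obtain a1 a2 where a: "a = (a1, a2)" by (cases a)
    obtain b1 b2 where b: "b = (b1, b2)" by (cases b)
    obtain v1 v2 where v: "v = (v1, v2)" by (cases v)
    have h: "a1 \<in> A1" "a2 \<in> A2" "b1 \<in> B1" "b2 \<in> B2" "v1 \<in> V1" "v2 \<in> V2"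
      using ab(1,2) wv(2) unfolding a b v by auto
    have e: "z1 = a1 + b1 + v1" "z2 = a2 + b2 + v2" using z wv(3) ab(3) unfolding a b v by auto
    have "z1 \<in> sumset (sumset A1 B1) V1" unfolding e by (intro sumsetI h)
    moreover have "z2 \<in> sumset (sumset A2 B2) V2" unfolding e by (intro sumsetI h)
    ultimately show "z \<in> sumset (sumset A1 B1) V1 \<times> sumset (sumset A2 B2) V2"
      unfolding z by simp
  next
    assume "z \<in> sumset (sumset A1 B1) V1 \<times> sumset (sumset A2 B2) V2"
    then have z12: "z1 \<in> sumset (sumset A1 B1) V1" "z2 \<in> sumset (sumset A2 B2) V2" unfolding z by auto
    from z12(1) obtain w1 v1 where w1: "w1 \<in> sumset A1 B1" "v1 \<in> V1" "z1 = w1 + v1" by (rule sumsetE)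
    from z12(2) obtain w2 v2 where w2: "w2 \<in> sumset A2 B2" "v2 \<in> V2" "z2 = w2 + v2" by (rule sumsetE)
    from w1(1) obtain a1 b1 where ab1: "a1 \<in> A1" "b1 \<in> B1" "w1 = a1 + b1" by (rule sumsetE)
    from w2(1) obtain a2 b2 where ab2: "a2 \<in> A2" "b2 \<in> B2" "w2 = a2 + b2" by (rule sumsetE)
    have "z = (a1, a2) + (b1, b2) + (v1, v2)" unfolding z w1(3) w2(3) ab1(3) ab2(3) by simp
    moreover have "(a1,a2) + (b1,b2) + (v1,v2) \<in> sumset (sumset (A1 \<times> A2) (B1 \<times> B2)) (V1 \<times> V2)"
      using ab1 ab2 w1 w2 by (intro sumsetI) auto
    ultimately show "z \<in> sumset (sumset (A1 \<times> A2) (B1 \<times> B2)) (V1 \<times> V2)" by simp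
  qed
qed

lemma sumset_empty2: "sumset X ({}::'a::ab_group_add set) = {}" by (simp add: sumset_def)
lemma beta_empty: "beta p ({}::'a::ab_group_add set) = 0"
proof -
  have "beta p ({}::'a set) \<le> 0"
    using beta_le[of "{0::'a}" "{0}" p "{}"] by (simp only: sumset_empty2 card.empty) simp
  then show ?thesis using beta_nonneg[of p "{}::'a set"] by linarith
qed

lemma finite_sumset: "finite A \<Longrightarrow> finite B \<Longrightarrow> finite (sumset A B)"
proof -
  assume "finite A" "finite B"
  moreover have "sumset A B \<subseteq> (\<lambda>q. fst q + snd q) ` (A \<times> B)"
  proof
    fix z assume "z \<in> sumset A B"
    then obtain x y where "x \<in> A" "y \<in> B" "z = x + y" unfolding sumset_def by blast
    then show "z \<in> (\<lambda>q. fst q + snd q) ` (A \<times> B)" by force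
  qed
  ultimately show ?thesis by (meson finite_SigmaI finite_imageI finite_subset)
qed

lemma ratio_pos:
  fixes A B V :: "'a::ab_group_add set"
  assumes "finite A" "A \<noteq> {}" "finite B" "B \<noteq> {}" "finite V" "V \<noteq> {}"
  shows "0 < real (card (sumset (sumset A B) V)) /
                    (real (card A) powr (1 / p) * real (card B) powr (1 - 1 / p))"
proof -
  have fin: "finite (sumset (sumset A B) V)" using assms by (simp add: finite_sumset)
  obtain x y z where "x \<in> A" "y \<in> B" "z \<in> V" using assms by blast
  then have "x + y + z \<in> sumset (sumset A B) V" by (intro sumsetI)
  then have "card (sumset (sumset A B) V) > 0" using fin card_gt_0_iff by blast
  then have n: "real (card (sumset (sumset A B) V)) > 0" by simp
  have "card A > 0" "card B > 0" using assms by (simp_all add: card_gt_0_iff)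
  then have "real (card A) > 0" "real (card B) > 0" by simp_all
  then have d: "real (card A) powr (1 / p) * real (card B) powr (1 - 1 / p) > 0"
    by (intro mult_pos_pos) simp_all
  show ?thesis using n d by (rule divide_pos_pos)
qed


lemma fib_finite: "finite X \<Longrightarrow> finite {x. (x, y) \<in> X}"
proof -
  assume "finite X"
  moreover have "{x. (x, y) \<in> X} \<subseteq> fst ` X" by force
  ultimately show ?thesis using finite_subset by blast
qed

lemma card_fib_sum:
  assumes "finite X"
  shows "card X = (\<Sum>y\<in>snd ` X. card {x. (x, y) \<in> X})"
proof -
  have X: "X = (\<Union>y\<in>snd ` X. (\<lambda>x. (x, y)) ` {x. (x, y) \<in> X})" by force
  have "card (\<Union>y\<in>snd ` X. (\<lambda>x. (x, y)) ` {x. (x, y) \<in> X})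
      = (\<Sum>y\<in>snd ` X. card ((\<lambda>x. (x, y)) ` {x. (x, y) \<in> X}))"
    by (rule card_UN_disjoint) (use assms in \<open>auto intro!: finite_imageI fib_finite\<close>)
  also have "\<dots> = (\<Sum>y\<in>snd ` X. card {x. (x, y) \<in> X})"
    by (rule sum.cong) (auto simp: card_image inj_on_def)
  finally show ?thesis using X by simp
qed

theorem mainTheorem7:
  fixes V1 :: "'a::ab_group_add set" and V2 :: "'b::ab_group_add set" and p :: real
  assumes "finite V1" and "finite V2" and "1 < p"
  shows "beta p (V1 \<times> V2) = beta p V1 * beta p V2"
proof -
  note fV1 = assms(1) and fV2 = assms(2) and p = assms(3)
  have b1nn: "0 \<le> beta p V1" and b2nn: "0 \<le> beta p V2" and bUnn: "0 \<le> beta p (V1 \<times> V2)"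
    by (rule beta_nonneg)+
  have upper: "beta p (V1 \<times> V2) \<le> beta p V1 * beta p V2"
  proof (cases "V1 = {} \<or> V2 = {}")
    case True
    then have e: "V1 \<times> V2 = {}" by auto
    have "beta p (V1 \<times> V2) = 0" unfolding e by (rule beta_empty)
    then show ?thesis using b1nn b2nn by simp
  next
    case False
    then have ne1: "V1 \<noteq> {}" and ne2: "V2 \<noteq> {}" by auto
    define R1 where "R1 = (\<lambda>A B. real (card (sumset (sumset A B) V1)) /
                    (real (card A) powr (1 / p) * real (card B) powr (1 - 1 / p)))"
    define R2 where "R2 = (\<lambda>A B. real (card (sumset (sumset A B) V2)) /
                    (real (card A) powr (1 / p) * real (card B) powr (1 - 1 / p)))"
    have key: "beta p (V1 \<times> V2) \<le> R1 A1 B1 * R2 A2 B2"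
      if "finite A1" "A1 \<noteq> {}" "finite B1" "B1 \<noteq> {}" "finite A2" "A2 \<noteq> {}" "finite B2" "B2 \<noteq> {}"
      for A1 B1 :: "'a set" and A2 B2 :: "'b set"
    proof -
      have "beta p (V1 \<times> V2) \<le> real (card (sumset (sumset (A1 \<times> A2) (B1 \<times> B2)) (V1 \<times> V2))) /
                    (real (card (A1 \<times> A2)) powr (1 / p) * real (card (B1 \<times> B2)) powr (1 - 1 / p))"
        by (rule beta_le) (use that in auto)
      also have "\<dots> = R1 A1 B1 * R2 A2 B2"
        unfolding R1_def R2_def sumset_prod card_cartesian_product of_nat_mult
        by (simp add: powr_mult mult_ac)
      finally show ?thesis .
    qed
    have step2: "beta p (V1 \<times> V2) \<le> beta p V1 * R2 A2 B2"
      if "finite A2" "A2 \<noteq> {}" "finite B2" "B2 \<noteq> {}" for A2 B2 :: "'b set"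
    proof -
      have R2p: "R2 A2 B2 > 0" unfolding R2_def by (rule ratio_pos) (use that fV2 ne2 in auto)
      have "beta p (V1 \<times> V2) / R2 A2 B2 \<le> beta p V1"
      proof (rule beta_ge)
        fix A B :: "'a set" assume "finite A" "A \<noteq> {}" "finite B" "B \<noteq> {}"
        then have "beta p (V1 \<times> V2) \<le> R1 A B * R2 A2 B2" using key that by blast
        then show "beta p (V1 \<times> V2) / R2 A2 B2 \<le> real (card (sumset (sumset A B) V1)) /
                    (real (card A) powr (1 / p) * real (card B) powr (1 - 1 / p))"
          using R2p unfolding R1_def by (simp add: pos_divide_le_eq)
      qed
      then show ?thesis using R2p by (simp add: pos_divide_le_eq)
    qed
    show ?thesis
    proof (cases "beta p V1 = 0")
      case True
      have "beta p (V1 \<times> V2) \<le> beta p V1 * R2 {0} {0}" by (rule step2) auto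
      then show ?thesis using True by simp
    next
      case False
      then have b1p: "beta p V1 > 0" using b1nn by simp
      have "beta p (V1 \<times> V2) / beta p V1 \<le> beta p V2"
      proof (rule beta_ge)
        fix A B :: "'b set" assume "finite A" "A \<noteq> {}" "finite B" "B \<noteq> {}"
        then have "beta p (V1 \<times> V2) \<le> beta p V1 * R2 A B" by (rule step2)
        then show "beta p (V1 \<times> V2) / beta p V1 \<le> real (card (sumset (sumset A B) V2)) /
                    (real (card A) powr (1 / p) * real (card B) powr (1 - 1 / p))"
          using b1p unfolding R2_def by (simp add: pos_divide_le_eq mult.commute)
      qed
      then show ?thesis using b1p by (simp add: pos_divide_le_eq mult.commute)
    qed
  qed
  have lower: "beta p V1 * beta p V2 \<le> beta p (V1 \<times> V2)"
  proof (cases "beta p V1 = 0")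
    case True
    then show ?thesis using bUnn by simp
  next
    case False
    then have b1p: "beta p V1 > 0" using b1nn by simp
    have ne1: "V1 \<noteq> {}" using False beta_empty by auto
    define th where "th = 1 / p"
    have th: "0 < th" "th < 1" using p by (auto simp: th_def)
    show ?thesis
    proof (rule beta_ge)
      fix A B :: "('a \<times> 'b) set"
      assume fA: "finite A" and Ane: "A \<noteq> {}" and fB: "finite B" and Bne: "B \<noteq> {}"
      define C where "C = sumset (sumset A B) (V1 \<times> V2)"
      have fC: "finite C" unfolding C_def using fA fB fV1 fV2 by (simp add: finite_sumset)
      define D where "D = real (card A) powr (1 / p) * real (card B) powr (1 - 1 / p)"
      have D0: "D > 0" unfolding D_def using fA fB Ane Bne by (simp add: card_gt_0_iff)
      define S where "S = snd ` A"
      define T where "T = snd ` B"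
      define a where "a = (\<lambda>s. beta p V1 * real (card {x. (x, s) \<in> A}))"
      define b where "b = (\<lambda>t. beta p V1 * real (card {x. (x, t) \<in> B}))"
      define h where "h = (\<lambda>y. real (card {x. (x, y) \<in> C}))"
      have fibne: "{x. (x, y) \<in> X} \<noteq> {}" if "y \<in> snd ` X" for y and X :: "('a \<times> 'b) set"
        using that by force
      have mem: "(x1 + x2 + v1, s + t + v) \<in> C"
        if "(x1, s) \<in> A" "(x2, t) \<in> B" "v1 \<in> V1" "v \<in> V2" for x1 x2 v1 s t v
      proof -
        have "(x1, s) + (x2, t) + (v1, v) \<in> C" unfolding C_def
          by (intro sumsetI) (use that in auto)
        then show ?thesis by simp
      qed
      have fin: "finite S" "finite T" unfolding S_def T_def using fA fB by auto
      have ZY: "sumset (sumset S T) V2 \<subseteq> snd ` C"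
      proof
        fix z assume "z \<in> sumset (sumset S T) V2"
        then obtain w v where wv: "w \<in> sumset S T" "v \<in> V2" "z = w + v" by (rule sumsetE)
        from wv(1) obtain s t where st: "s \<in> S" "t \<in> T" "w = s + t" by (rule sumsetE)
        obtain x1 where x1: "(x1, s) \<in> A" using st(1) unfolding S_def by force
        obtain x2 where x2: "(x2, t) \<in> B" using st(2) unfolding T_def by force
        obtain v1 where v1: "v1 \<in> V1" using ne1 by blast
        have "(x1 + x2 + v1, z) \<in> C" using mem[OF x1 x2 v1 wv(2)] wv(3) st(3) by simp
        then show "z \<in> snd ` C" by force
      qed
      have hnn: "\<forall>y\<in>snd ` C. 0 \<le> h y" unfolding h_def by simp
      have apos: "\<forall>s\<in>S. 0 < a s" unfolding a_def S_def
        using b1p fibne fib_finite[OF fA] by (auto simp: card_gt_0_iff)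
      have bpos: "\<forall>t\<in>T. 0 < b t" unfolding b_def T_def
        using b1p fibne fib_finite[OF fB] by (auto simp: card_gt_0_iff)
      have hyp: "\<forall>s\<in>S. \<forall>t\<in>T. \<forall>v\<in>V2. a s powr (1/p) * b t powr (1-1/p) \<le> h (s+t+v)"
      proof (intro ballI)
        fix s t v assume s: "s \<in> S" and t: "t \<in> T" and v: "v \<in> V2"
        define As where "As = {x. (x, s) \<in> A}"
        define Bt where "Bt = {x. (x, t) \<in> B}"
        have fAs: "finite As" "As \<noteq> {}" unfolding As_def using fib_finite[OF fA] fibne s S_def by auto
        have fBt: "finite Bt" "Bt \<noteq> {}" unfolding Bt_def using fib_finite[OF fB] fibne t T_def by auto
        have "a s powr (1/p) * b t powr (1-1/p)
            = beta p V1 * (real (card As) powr (1/p) * real (card Bt) powr (1-1/p))"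
          unfolding a_def b_def As_def Bt_def using scale_gm b1nn by simp
        also have "\<dots> \<le> real (card (sumset (sumset As Bt) V1))"
          by (rule beta_card[OF fAs fBt])
        also have "\<dots> \<le> h (s+t+v)" unfolding h_def
        proof (intro of_nat_mono card_mono)
          show "finite {x. (x, s + t + v) \<in> C}" by (rule fib_finite[OF fC])
          show "sumset (sumset As Bt) V1 \<subseteq> {x. (x, s + t + v) \<in> C}"
          proof
            fix x assume "x \<in> sumset (sumset As Bt) V1"
            then obtain w v1 where wv: "w \<in> sumset As Bt" "v1 \<in> V1" "x = w + v1" by (rule sumsetE)
            from wv(1) obtain x1 x2 where xx: "x1 \<in> As" "x2 \<in> Bt" "w = x1 + x2" by (rule sumsetE)
            have "(x1 + x2 + v1, s + t + v) \<in> C"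
              by (rule mem) (use xx wv v in \<open>auto simp: As_def Bt_def\<close>)
            then show "x \<in> {x. (x, s + t + v) \<in> C}" using wv xx by simp
          qed
        qed
        finally show "a s powr (1/p) * b t powr (1-1/p) \<le> h (s+t+v)" .
      qed
      have main: "beta p V2 * ((sum a S) powr (1/p) * (sum b T) powr (1-1/p)) \<le> sum h (snd ` C)"
        by (rule func_ineq[OF p _ fin ZY hnn apos bpos hyp]) (use fC in simp)
      have sa: "sum a S = beta p V1 * card A"
        unfolding a_def S_def by (simp add: sum_distrib_left card_fib_sum[OF fA])
      have sb: "sum b T = beta p V1 * card B"
        unfolding b_def T_def by (simp add: sum_distrib_left card_fib_sum[OF fB])
      have sh: "sum h (snd ` C) = card C"
        unfolding h_def by (simp add: card_fib_sum[OF fC])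
      have "(sum a S) powr (1/p) * (sum b T) powr (1-1/p) = beta p V1 * D"
        unfolding sa sb D_def using scale_gm b1nn by simp
      then have "beta p V1 * beta p V2 * D \<le> card C" using main sh by (simp add: mult_ac)
      then show "beta p V1 * beta p V2 \<le> real (card (sumset (sumset A B) (V1 \<times> V2))) /
                    (real (card A) powr (1 / p) * real (card B) powr (1 - 1 / p))"
        using D0 unfolding C_def D_def by (simp add: pos_le_divide_eq)
    qed
  qed
  show ?thesis using upper lower by linarith
qed

end
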